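(* Let $A,B$ be real $m\times n$ matrices with a simultaneous block structure, and let $b$ be the number of blocks. Let $P,Q$ be $m\times n$ matrices such that $P$ is binary and all entries of $Q$ lie in $[0,1]$. Then $$\|(A-B)\circ Q\|_{\bar F}\le\|(A-B)\circ P\|_{\bar F}+\sqrt{b\|P-Q\|_\Box}\,\|A-B\|_\infty.$$
   Context: A binary matrix has entries in $\{0,1\}$. $\circ$ is the entrywise product; $\|A\|_\infty=\max|a_{ij}|$; $\|A\|_{\bar F}=\big(\frac1{mn}\sum_{i,j}a_{ij}^2\big)^{1/2}$; $\|A\|_\Box=\frac1{mn}\max\{|x^TAy|:x\in\mathbb{R}^m,y\in\mathbb{R}^n,\|x\|_\infty\le1,\|y\|_\infty\le1\}$. A matrix is a block matrix if the rows are partitioned into consecutive intervals and the columns into consecutive intervals such that the matrix is constant on each product of a row interval and a column interval (the blocks); two matrices have a simultaneous block structure if both are block matrices for the same row and column partitions. *)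

theory Defs
  imports Complex_Main
begin

text \<open>Real m x n matrices are represented as functions nat => nat => real;
  only the entries with row index < m and column index < n are relevant.\<close>

definition sup_norm :: "nat \<Rightarrow> nat \<Rightarrow> (nat \<Rightarrow> nat \<Rightarrow> real) \<Rightarrow> real" where
  "sup_norm m n A = Max {\<bar>A i j\<bar> | i j. i < m \<and> j < n}"

definition nfrob_norm :: "nat \<Rightarrow> nat \<Rightarrow> (nat \<Rightarrow> nat \<Rightarrow> real) \<Rightarrow> real" where
  "nfrob_norm m n A = sqrt ((1 / (real m * real n)) * (\<Sum>i<m. \<Sum>j<n. (A i j)\<^sup>2))"

definition cut_norm :: "nat \<Rightarrow> nat \<Rightarrow> (nat \<Rightarrow> nat \<Rightarrow> real) \<Rightarrow> real" where
  "cut_norm m n A = (1 / (real m * real n)) *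
     Sup {\<bar>\<Sum>i<m. \<Sum>j<n. x i * A i j * y j\<bar> | x y.
            (\<forall>i<m. \<bar>x i\<bar> \<le> 1) \<and> (\<forall>j<n. \<bar>y j\<bar> \<le> 1)}"

definition hadamard :: "(nat \<Rightarrow> nat \<Rightarrow> real) \<Rightarrow> (nat \<Rightarrow> nat \<Rightarrow> real) \<Rightarrow> nat \<Rightarrow> nat \<Rightarrow> real" where
  "hadamard A B = (\<lambda>i j. A i j * B i j)"

text \<open>A partition of {0..<m} into consecutive nonempty intervals, given by the
  strictly increasing list of cut points 0 = r_0 < r_1 < ... < r_p = m;
  the intervals are {r_k..<r_(k+1)} for k < p = length rs - 1.\<close>

definition interval_partition :: "nat \<Rightarrow> nat list \<Rightarrow> bool" where
  "interval_partition m rs \<longleftrightarrow> rs \<noteq> [] \<and> sorted_wrt (<) rs \<and> hd rs = 0 \<and> last rs = m"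

definition is_block_matrix :: "nat list \<Rightarrow> nat list \<Rightarrow> (nat \<Rightarrow> nat \<Rightarrow> real) \<Rightarrow> bool" where
  "is_block_matrix rs cs A \<longleftrightarrow>
     (\<forall>k < length rs - 1. \<forall>l < length cs - 1.
        \<forall>i \<in> {rs ! k ..< rs ! Suc k}. \<forall>i' \<in> {rs ! k ..< rs ! Suc k}.
        \<forall>j \<in> {cs ! l ..< cs ! Suc l}. \<forall>j' \<in> {cs ! l ..< cs ! Suc l}.
          A i j = A i' j')"

end

theory Submission
  imports Defs
begin

lemma sum_blocks_aux:
  fixes rs :: "nat list"
  assumes "sorted_wrt (<) rs"
  shows "p \<le> length rs - 1 \<Longrightarrow> rs \<noteq> [] \<Longrightarrow>
    (\<Sum>k<p. \<Sum>i=rs!k..<rs!Suc k. f i) = (\<Sum>i=rs!0..<rs!p. (f i :: real))"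
proof (induction p)
  case 0
  have "{rs!0..<rs!0} = {}" by simp
  then show ?case by (simp only: sum.empty lessThan_0)
next
  case (Suc p)
  have a: "rs!0 \<le> rs!p"
    using Suc.prems assms by (cases p) (auto simp: sorted_wrt_iff_nth_less intro: less_imp_le)
  have b: "rs!p \<le> rs!Suc p"
    using Suc.prems assms by (auto simp: sorted_wrt_iff_nth_less intro: less_imp_le)
  have ih: "(\<Sum>k<p. \<Sum>i=rs!k..<rs!Suc k. f i) = (\<Sum>i=rs!0..<rs!p. f i)"
    using Suc.IH Suc.prems by simp
  have "(\<Sum>k<Suc p. \<Sum>i=rs!k..<rs!Suc k. f i) = (\<Sum>k<p. \<Sum>i=rs!k..<rs!Suc k. f i) + (\<Sum>i=rs!p..<rs!Suc p. f i)"
    by (rule sum.lessThan_Suc)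
  also have "\<dots> = (\<Sum>i=rs!0..<rs!Suc p. f i)"
    unfolding ih by (rule sum.atLeastLessThan_concat[OF a b])
  finally show ?case .
qed

lemma sum_blocks:
  assumes "interval_partition m rs"
  shows "(\<Sum>k<length rs - 1. \<Sum>i=rs!k..<rs!Suc k. f i) = (\<Sum>i<m. (f i :: real))"
proof -
  have "rs \<noteq> []" "sorted_wrt (<) rs" "hd rs = 0" "last rs = m"
    using assms by (auto simp: interval_partition_def)
  moreover then have "rs!0 = 0" "rs!(length rs - 1) = m" by (auto simp: hd_conv_nth last_conv_nth)
  ultimately show ?thesis using sum_blocks_aux[of rs "length rs - 1" f]
    by (simp add: atLeast0LessThan)
qed

lemma block_sub:
  assumes "interval_partition m rs" "k < length rs - 1"
  shows "{rs!k..<rs!Suc k} \<subseteq> {..<m}"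
proof -
  have "rs \<noteq> []" "sorted_wrt (<) rs" "last rs = m"
    using assms by (auto simp: interval_partition_def)
  then have "rs!Suc k \<le> m"
    using assms(2)
    by (cases "Suc k = length rs - 1") (auto simp: last_conv_nth sorted_wrt_iff_nth_less intro: less_imp_le)
  then show ?thesis by auto
qed

lemma cut_block:
  assumes "R \<subseteq> {..<m}" "C \<subseteq> {..<n}" "0 < m" "0 < n"
  shows "\<bar>\<Sum>i\<in>R. \<Sum>j\<in>C. M i j\<bar> \<le> real m * real n * cut_norm m n M"
proof -
  define X where "X = {\<bar>\<Sum>i<m. \<Sum>j<n. x i * M i j * y j\<bar> | x y.
            (\<forall>i<m. \<bar>x i\<bar> \<le> 1) \<and> (\<forall>j<n. \<bar>y j\<bar> \<le> 1)}"
  have bdd: "bdd_above X"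
    unfolding bdd_above_def
  proof (intro exI ballI)
    fix t assume "t \<in> X"
    then obtain x y where t: "t = \<bar>\<Sum>i<m. \<Sum>j<n. x i * M i j * y j\<bar>"
      and x: "\<forall>i<m. \<bar>x i\<bar> \<le> 1" and y: "\<forall>j<n. \<bar>y j\<bar> \<le> 1" unfolding X_def by blast
    have "t \<le> (\<Sum>i<m. \<bar>\<Sum>j<n. x i * M i j * y j\<bar>)" unfolding t by (rule sum_abs)
    also have "\<dots> \<le> (\<Sum>i<m. \<Sum>j<n. \<bar>x i * M i j * y j\<bar>)"
      by (intro sum_mono sum_abs)
    also have "\<dots> \<le> (\<Sum>i<m. \<Sum>j<n. \<bar>M i j\<bar>)"
    proof (intro sum_mono)
      fix i j assume "i \<in> {..<m}" "j \<in> {..<n}"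
      then have "\<bar>x i\<bar> \<le> 1" "\<bar>y j\<bar> \<le> 1" using x y by auto
      then have "\<bar>x i\<bar> * \<bar>M i j\<bar> * \<bar>y j\<bar> \<le> 1 * \<bar>M i j\<bar> * 1"
        by (intro mult_mono) auto
      then show "\<bar>x i * M i j * y j\<bar> \<le> \<bar>M i j\<bar>" by (simp add: abs_mult)
    qed
    finally show "t \<le> (\<Sum>i<m. \<Sum>j<n. \<bar>M i j\<bar>)" .
  qed
  define x where "x = (\<lambda>i. if i \<in> R then 1 else (0::real))"
  define y where "y = (\<lambda>j. if j \<in> C then 1 else (0::real))"
  have fR: "finite R" "finite C" using assms finite_subset by auto
  have eq: "(\<Sum>i<m. \<Sum>j<n. x i * M i j * y j) = (\<Sum>i\<in>R. \<Sum>j\<in>C. M i j)"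
  proof -
    have "(\<Sum>i<m. \<Sum>j<n. x i * M i j * y j) = (\<Sum>i<m. if i \<in> R then (\<Sum>j<n. if j \<in> C then M i j else 0) else 0)"
      unfolding x_def y_def by (intro sum.cong) (auto intro: sum.cong)
    also have "\<dots> = (\<Sum>i\<in>{..<m} \<inter> R. \<Sum>j<n. if j \<in> C then M i j else 0)"
      by (simp add: sum.inter_restrict)
    also have "\<dots> = (\<Sum>i\<in>R. \<Sum>j\<in>{..<n} \<inter> C. M i j)"
    proof -
      have e: "{..<m} \<inter> R = R" using assms by auto
      show ?thesis unfolding e by (rule sum.cong[OF refl], rule sum.inter_restrict[symmetric]) simp
    qed
    also have "\<dots> = (\<Sum>i\<in>R. \<Sum>j\<in>C. M i j)"
      using assms by (simp add: Int_absorb1)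
    finally show ?thesis .
  qed
  have "\<bar>\<Sum>i\<in>R. \<Sum>j\<in>C. M i j\<bar> \<in> X"
    unfolding X_def eq[symmetric] by (rule CollectI, rule exI[of _ x], rule exI[of _ y]) (auto simp: x_def y_def)
  then have "\<bar>\<Sum>i\<in>R. \<Sum>j\<in>C. M i j\<bar> \<le> Sup X" using bdd by (rule cSup_upper)
  also have "Sup X = real m * real n * cut_norm m n M"
    unfolding cut_norm_def X_def[symmetric] using assms by simp
  finally show ?thesis .
qed

lemma sup_norm_ge:
  assumes "i < m" "j < n"
  shows "\<bar>M i j\<bar> \<le> sup_norm m n M"
proof -
  have "{\<bar>M i j\<bar> | i j. i < m \<and> j < n} \<subseteq> (\<lambda>(i,j). \<bar>M i j\<bar>) ` ({..<m} \<times> {..<n})" by auto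
  then have "finite {\<bar>M i j\<bar> | i j. i < m \<and> j < n}" by (rule finite_subset) auto
  then show ?thesis unfolding sup_norm_def using assms by (intro Max_ge) auto
qed

theorem lemma7p3:
  fixes m n :: nat and rs cs :: "nat list" and A B P Q :: "nat \<Rightarrow> nat \<Rightarrow> real" and b :: nat
  assumes "0 < m" and "0 < n"
    and "interval_partition m rs" and "interval_partition n cs"
    and "is_block_matrix rs cs A" and "is_block_matrix rs cs B"
    and "b = (length rs - 1) * (length cs - 1)"
    and "\<forall>i<m. \<forall>j<n. P i j = 0 \<or> P i j = 1"
    and "\<forall>i<m. \<forall>j<n. 0 \<le> Q i j \<and> Q i j \<le> 1"
  shows "nfrob_norm m n (hadamard (\<lambda>i j. A i j - B i j) Q)
     \<le> nfrob_norm m n (hadamard (\<lambda>i j. A i j - B i j) P)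
       + sqrt (real b * cut_norm m n (\<lambda>i j. P i j - Q i j)) * sup_norm m n (\<lambda>i j. A i j - B i j)"
proof -
  define D where "D = (\<lambda>i j. A i j - B i j)"
  define S where "S = sup_norm m n D"
  define c where "c = cut_norm m n (\<lambda>i j. P i j - Q i j)"
  define N where "N = real m * real n"
  have Npos: "N > 0" unfolding N_def using assms by simp
  have S0: "0 \<le> S" unfolding S_def using sup_norm_ge[of 0 m 0 n D] assms by linarith
  have step1: "(\<Sum>i<m. \<Sum>j<n. (D i j * Q i j)\<^sup>2) \<le>
     (\<Sum>i<m. \<Sum>j<n. (D i j * P i j)\<^sup>2) + (\<Sum>i<m. \<Sum>j<n. (D i j)\<^sup>2 * (Q i j - P i j))"
  proof -
    have "(\<Sum>i<m. \<Sum>j<n. (D i j * Q i j)\<^sup>2) \<le>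
      (\<Sum>i<m. \<Sum>j<n. (D i j * P i j)\<^sup>2 + (D i j)\<^sup>2 * (Q i j - P i j))"
    proof (intro sum_mono)
      fix i j assume "i \<in> {..<m}" "j \<in> {..<n}"
      then have p: "P i j = 0 \<or> P i j = 1" and q: "0 \<le> Q i j" "Q i j \<le> 1" using assms by auto
      have "Q i j * Q i j \<le> Q i j" using mult_left_le[OF q(2) q(1)] .
      then have "(Q i j)\<^sup>2 \<le> Q i j" by (simp add: power2_eq_square)
      then have "(D i j)\<^sup>2 * (Q i j)\<^sup>2 \<le> (D i j)\<^sup>2 * Q i j" by (intro mult_left_mono) auto
      then show "(D i j * Q i j)\<^sup>2 \<le> (D i j * P i j)\<^sup>2 + (D i j)\<^sup>2 * (Q i j - P i j)"
        using p by (auto simp: power_mult_distrib algebra_simps)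
    qed
    then show ?thesis by (simp add: sum.distrib)
  qed
  have blockD: "D i j = D (rs!k) (cs!l)" if "k < length rs - 1" "l < length cs - 1"
    "i \<in> {rs!k..<rs!Suc k}" "j \<in> {cs!l..<cs!Suc l}" for i j k l
  proof -
    have "rs!k \<in> {rs!k..<rs!Suc k}" "cs!l \<in> {cs!l..<cs!Suc l}" using that by auto
    note mem = this
    have hA: "\<forall>k < length rs - 1. \<forall>l < length cs - 1.
        \<forall>i \<in> {rs ! k ..< rs ! Suc k}. \<forall>i' \<in> {rs ! k ..< rs ! Suc k}.
        \<forall>j \<in> {cs ! l ..< cs ! Suc l}. \<forall>j' \<in> {cs ! l ..< cs ! Suc l}.
          A i j = A i' j'" using assms(5) unfolding is_block_matrix_def .
    have hB: "\<forall>k < length rs - 1. \<forall>l < length cs - 1.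
        \<forall>i \<in> {rs ! k ..< rs ! Suc k}. \<forall>i' \<in> {rs ! k ..< rs ! Suc k}.
        \<forall>j \<in> {cs ! l ..< cs ! Suc l}. \<forall>j' \<in> {cs ! l ..< cs ! Suc l}.
          B i j = B i' j'" using assms(6) unfolding is_block_matrix_def .
    have "A i j = A (rs!k) (cs!l)" using hA that(1,2) that(3) mem(1) that(4) mem(2) by blast
    moreover have "B i j = B (rs!k) (cs!l)" using hB that(1,2) that(3) mem(1) that(4) mem(2) by blast
    ultimately show ?thesis unfolding D_def by simp
  qed
  have step2: "(\<Sum>i<m. \<Sum>j<n. (D i j)\<^sup>2 * (Q i j - P i j)) \<le> real b * S\<^sup>2 * N * c"
  proof -
    have "(\<Sum>i<m. \<Sum>j<n. (D i j)\<^sup>2 * (Q i j - P i j)) =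
      (\<Sum>k<length rs - 1. \<Sum>i=rs!k..<rs!Suc k. \<Sum>l<length cs - 1. \<Sum>j=cs!l..<cs!Suc l. (D i j)\<^sup>2 * (Q i j - P i j))"
      using sum_blocks[OF assms(3)] sum_blocks[OF assms(4)] by simp
    also have "\<dots> = (\<Sum>k<length rs - 1. \<Sum>l<length cs - 1. \<Sum>i=rs!k..<rs!Suc k. \<Sum>j=cs!l..<cs!Suc l. (D i j)\<^sup>2 * (Q i j - P i j))"
      by (intro sum.cong refl sum.swap)
    also have "\<dots> = (\<Sum>k<length rs - 1. \<Sum>l<length cs - 1. (D (rs!k) (cs!l))\<^sup>2 * (\<Sum>i=rs!k..<rs!Suc k. \<Sum>j=cs!l..<cs!Suc l. (Q i j - P i j)))"
    proof (rule sum.cong[OF refl], rule sum.cong[OF refl])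
      fix k l assume k: "k \<in> {..<length rs - 1}" and l: "l \<in> {..<length cs - 1}"
      have "(\<Sum>i=rs!k..<rs!Suc k. \<Sum>j=cs!l..<cs!Suc l. (D i j)\<^sup>2 * (Q i j - P i j))
          = (\<Sum>i=rs!k..<rs!Suc k. \<Sum>j=cs!l..<cs!Suc l. (D (rs!k) (cs!l))\<^sup>2 * (Q i j - P i j))"
      proof (rule sum.cong[OF refl], rule sum.cong[OF refl])
        fix i j assume "i \<in> {rs!k..<rs!Suc k}" "j \<in> {cs!l..<cs!Suc l}"
        then have "D i j = D (rs!k) (cs!l)" using k l by (intro blockD) auto
        then show "(D i j)\<^sup>2 * (Q i j - P i j) = (D (rs!k) (cs!l))\<^sup>2 * (Q i j - P i j)" by simp
      qed
      then show "(\<Sum>i=rs!k..<rs!Suc k. \<Sum>j=cs!l..<cs!Suc l. (D i j)\<^sup>2 * (Q i j - P i j))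
          = (D (rs!k) (cs!l))\<^sup>2 * (\<Sum>i=rs!k..<rs!Suc k. \<Sum>j=cs!l..<cs!Suc l. (Q i j - P i j))"
        by (simp add: sum_distrib_left)
    qed
    also have "\<dots> \<le> (\<Sum>k<length rs - 1. \<Sum>l<length cs - 1. S\<^sup>2 * (N * c))"
    proof (intro sum_mono)
      fix k l assume k: "k \<in> {..<length rs - 1}" and l: "l \<in> {..<length cs - 1}"
      have R: "{rs!k..<rs!Suc k} \<subseteq> {..<m}" using block_sub[OF assms(3)] k by auto
      have C: "{cs!l..<cs!Suc l} \<subseteq> {..<n}" using block_sub[OF assms(4)] l by auto
      have "rs!k < rs!Suc k" proof (rule sorted_wrt_nth_less[where P="(<)"])
        show "sorted_wrt (<) rs" using assms(3) unfolding interval_partition_def by blast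
        show "k < Suc k" by (rule lessI)
        show "Suc k < length rs" using k by simp
      qed
      moreover have "cs!l < cs!Suc l" proof (rule sorted_wrt_nth_less[where P="(<)"])
        show "sorted_wrt (<) cs" using assms(4) unfolding interval_partition_def by blast
        show "l < Suc l" by (rule lessI)
        show "Suc l < length cs" using l by simp
      qed
      ultimately have "rs!k < m" "cs!l < n" using R C by auto
      then have "\<bar>D (rs!k) (cs!l)\<bar> \<le> S" unfolding S_def by (rule sup_norm_ge)
      then have "\<bar>D (rs!k) (cs!l)\<bar>\<^sup>2 \<le> S\<^sup>2" by (rule power_mono) simp
      then have d: "(D (rs!k) (cs!l))\<^sup>2 \<le> S\<^sup>2" by (simp only: power2_abs)
      have cb: "\<bar>\<Sum>i=rs!k..<rs!Suc k. \<Sum>j=cs!l..<cs!Suc l. (P i j - Q i j)\<bar> \<le> N * c"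
        unfolding N_def c_def using cut_block[OF R C assms(1,2)] by simp
      have "(\<Sum>i=rs!k..<rs!Suc k. \<Sum>j=cs!l..<cs!Suc l. (Q i j - P i j)) =
         - (\<Sum>i=rs!k..<rs!Suc k. \<Sum>j=cs!l..<cs!Suc l. (P i j - Q i j))"
        by (simp add: sum_negf[symmetric])
      then have cb2: "(\<Sum>i=rs!k..<rs!Suc k. \<Sum>j=cs!l..<cs!Suc l. (Q i j - P i j)) \<le> N * c" using cb by linarith
      have Nc: "0 \<le> N * c" using cb by linarith
      show "(D (rs!k) (cs!l))\<^sup>2 * (\<Sum>i=rs!k..<rs!Suc k. \<Sum>j=cs!l..<cs!Suc l. (Q i j - P i j)) \<le> S\<^sup>2 * (N * c)"
      proof -
        have "(D (rs!k) (cs!l))\<^sup>2 * (\<Sum>i=rs!k..<rs!Suc k. \<Sum>j=cs!l..<cs!Suc l. (Q i j - P i j)) \<le> (D (rs!k) (cs!l))\<^sup>2 * (N * c)"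
          by (rule mult_left_mono[OF cb2]) simp
        also have "\<dots> \<le> S\<^sup>2 * (N * c)" by (rule mult_right_mono[OF d Nc])
        finally show ?thesis .
      qed
    qed
    also have "\<dots> = real b * S\<^sup>2 * N * c" using assms(7) by simp
    finally show ?thesis .
  qed
  have key: "(1/N) * (\<Sum>i<m. \<Sum>j<n. (D i j * Q i j)\<^sup>2) \<le>
     (1/N) * (\<Sum>i<m. \<Sum>j<n. (D i j * P i j)\<^sup>2) + real b * c * S\<^sup>2"
  proof -
    have "(\<Sum>i<m. \<Sum>j<n. (D i j * Q i j)\<^sup>2) \<le> (\<Sum>i<m. \<Sum>j<n. (D i j * P i j)\<^sup>2) + real b * S\<^sup>2 * N * c"
      using step1 step2 by linarith
    then have "(1/N) * (\<Sum>i<m. \<Sum>j<n. (D i j * Q i j)\<^sup>2) \<le> (1/N) * ((\<Sum>i<m. \<Sum>j<n. (D i j * P i j)\<^sup>2) + real b * S\<^sup>2 * N * c)"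
      using Npos by (intro mult_left_mono) auto
    also have "\<dots> = (1/N) * (\<Sum>i<m. \<Sum>j<n. (D i j * P i j)\<^sup>2) + real b * c * S\<^sup>2"
      using Npos by (simp add: field_simps)
    finally show ?thesis .
  qed
  have nn: "0 \<le> (1/N) * (\<Sum>i<m. \<Sum>j<n. (D i j * P i j)\<^sup>2)" using Npos by (intro mult_nonneg_nonneg sum_nonneg) auto
  have "nfrob_norm m n (hadamard D Q) = sqrt ((1/N) * (\<Sum>i<m. \<Sum>j<n. (D i j * Q i j)\<^sup>2))"
    unfolding nfrob_norm_def hadamard_def N_def ..
  also have "\<dots> \<le> sqrt ((1/N) * (\<Sum>i<m. \<Sum>j<n. (D i j * P i j)\<^sup>2) + real b * c * S\<^sup>2)"
    using key by simp
  also have "\<dots> \<le> sqrt ((1/N) * (\<Sum>i<m. \<Sum>j<n. (D i j * P i j)\<^sup>2)) + sqrt (real b * c * S\<^sup>2)"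
  proof (rule sqrt_add_le_add_sqrt[OF nn])
    have "\<bar>\<Sum>i\<in>{}. \<Sum>j\<in>{}. P i j - Q i j\<bar> \<le> real m * real n * c"
      unfolding c_def by (rule cut_block) (use assms in auto)
    then have "0 \<le> N * c" unfolding N_def by simp
    then have "0 \<le> c" using Npos by (simp add: zero_le_mult_iff)
    then show "0 \<le> real b * c * S\<^sup>2" by simp
  qed
  also have "sqrt (real b * c * S\<^sup>2) = sqrt (real b * c) * S"
    using S0 by (simp add: real_sqrt_mult)
  also have "sqrt ((1/N) * (\<Sum>i<m. \<Sum>j<n. (D i j * P i j)\<^sup>2)) = nfrob_norm m n (hadamard D P)"
    unfolding nfrob_norm_def hadamard_def N_def ..
  finally show ?thesis unfolding D_def S_def c_def .
qed

end
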